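(* Let $(G,+)$ be an abelian group with identity $0$. Let $M$ be a matroid over $G$ and let $N$ be a paving matroid over $G$, both of rank $n$, such that $|E(M)|=|E(N)|=n+1<p(G)$. Assume there exists a total order $\preceq$ on $E(M)\cup E(N)\cup (E(M)+E(N))\cup\{0\}$ that is compatible with the group structure of $G$, such that $E(M)$ and $E(N)$ are both positive, and $\max(E(M))\notin E(M)+E(N)$. Then $M$ is matched to $N$.
   Context: $p(G)$ denotes the smallest cardinality of a nonzero subgroup of $G$. $A+B=\{a+b: a\in A, b\in B\}$. A total order $\preceq$ on a subset $A\subseteq G$ is compatible with the group structure if for all $a,b,c\in A$, $a\preceq b$ implies $a+c\preceq b+c$. With respect to such an order on a set containing $0$, an element $x$ is positive if $0\prec x$ (i.e. $0\preceq x$ and $x\ne 0$), and a set is positive if all its elements are positive. A matroid over $G$ is a matroid $M$ whose finite ground set $E(M)$ is a subset of $G$; all matroids are assumed loopless. A matroid of rank $n$ is paving if every $(n-1)$-element subset of its ground set is independent. For matroids $M,N$ over $G$ with $r(M)=r(N)=n>0$ and bases $\mathcal{M}=\{a_1,\dots,a_n\}$ of $M$ and $\mathcal{N}=\{b_1,\dots,b_n\}$ of $N$, $\mathcal{M}$ is matched to $\mathcal{N}$ if there is a permutation $\pi\in S_n$ with $a_i+b_{\pi(i)}\notin E(M)$ for all $i$. $M$ is matched to $N$ if for every basis $\mathcal{M}$ of $M$ there exists a basis $\mathcal{N}$ of $N$ such that $\mathcal{M}$ is matched to $\mathcal{N}$. *)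

theory Defs
  imports Main "HOL-Library.Extended_Nat"
begin

definition sumset :: "'a::ab_group_add set \<Rightarrow> 'a set \<Rightarrow> 'a set" where
  "sumset A B = {a + b | a b. a \<in> A \<and> b \<in> B}"

definition is_subgroup :: "'a::ab_group_add set \<Rightarrow> bool" where
  "is_subgroup H \<longleftrightarrow> 0 \<in> H \<and> (\<forall>x\<in>H. \<forall>y\<in>H. x + y \<in> H) \<and> (\<forall>x\<in>H. - x \<in> H)"

(* p(G): smallest cardinality of a nonzero subgroup (\<infinity> if none is finite / none exists) *)
definition pG :: "'a::ab_group_add itself \<Rightarrow> enat" where
  "pG _ = (INF H \<in> {H :: 'a set. is_subgroup H \<and> H \<noteq> {0}}.
              (if finite H then enat (card H) else \<infinity>))"

definition matroid :: "'a set \<Rightarrow> ('a set \<Rightarrow> bool) \<Rightarrow> bool" where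
  "matroid E I \<longleftrightarrow> finite E \<and> I {} \<and>
     (\<forall>A. I A \<longrightarrow> A \<subseteq> E) \<and>
     (\<forall>A B. I B \<and> A \<subseteq> B \<longrightarrow> I A) \<and>
     (\<forall>A B. I A \<and> I B \<and> card A < card B \<longrightarrow> (\<exists>x\<in>B - A. I (insert x A)))"

definition loopless :: "'a set \<Rightarrow> ('a set \<Rightarrow> bool) \<Rightarrow> bool" where
  "loopless E I \<longleftrightarrow> (\<forall>x\<in>E. I {x})"

definition mrank :: "'a set \<Rightarrow> ('a set \<Rightarrow> bool) \<Rightarrow> nat" where
  "mrank E I = Max (card ` {A. A \<subseteq> E \<and> I A})"

definition is_basis :: "'a set \<Rightarrow> ('a set \<Rightarrow> bool) \<Rightarrow> 'a set \<Rightarrow> bool" where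
  "is_basis E I B \<longleftrightarrow> B \<subseteq> E \<and> I B \<and> (\<forall>C. C \<subseteq> E \<and> I C \<and> B \<subseteq> C \<longrightarrow> C = B)"

definition paving :: "'a set \<Rightarrow> ('a set \<Rightarrow> bool) \<Rightarrow> bool" where
  "paving E I \<longleftrightarrow> (\<forall>A. A \<subseteq> E \<and> card A = mrank E I - 1 \<longrightarrow> I A)"

definition basis_matched :: "'a::ab_group_add set \<Rightarrow> 'a set \<Rightarrow> 'a set \<Rightarrow> bool" where
  "basis_matched EM BM BN \<longleftrightarrow> (\<exists>f. bij_betw f BM BN \<and> (\<forall>a\<in>BM. a + f a \<notin> EM))"

definition matroid_matched ::
  "'a::ab_group_add set \<Rightarrow> ('a set \<Rightarrow> bool) \<Rightarrow> 'a set \<Rightarrow> ('a set \<Rightarrow> bool) \<Rightarrow> bool" where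
  "matroid_matched EM IM EN IN \<longleftrightarrow>
     (\<forall>BM. is_basis EM IM BM \<longrightarrow> (\<exists>BN. is_basis EN IN BN \<and> basis_matched EM BM BN))"

definition total_order_on :: "'a set \<Rightarrow> ('a \<Rightarrow> 'a \<Rightarrow> bool) \<Rightarrow> bool" where
  "total_order_on S le \<longleftrightarrow>
     (\<forall>x\<in>S. le x x) \<and>
     (\<forall>x\<in>S. \<forall>y\<in>S. le x y \<and> le y x \<longrightarrow> x = y) \<and>
     (\<forall>x\<in>S. \<forall>y\<in>S. \<forall>z\<in>S. le x y \<and> le y z \<longrightarrow> le x z) \<and>
     (\<forall>x\<in>S. \<forall>y\<in>S. le x y \<or> le y x)"

definition compatible_order :: "'a::ab_group_add set \<Rightarrow> ('a \<Rightarrow> 'a \<Rightarrow> bool) \<Rightarrow> bool" where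
  "compatible_order S le \<longleftrightarrow> (\<forall>a\<in>S. \<forall>b\<in>S. \<forall>c\<in>S. le a b \<longrightarrow> le (a + c) (b + c))"

definition positive_set :: "('a::ab_group_add \<Rightarrow> 'a \<Rightarrow> bool) \<Rightarrow> 'a set \<Rightarrow> bool" where
  "positive_set le A \<longleftrightarrow> (\<forall>x\<in>A. le 0 x \<and> x \<noteq> 0)"

end

theory Submission
  imports Defs
begin

lemma restr1: "\<forall>x\<in>A. P x \<Longrightarrow> B \<subseteq> A \<Longrightarrow> \<forall>x\<in>B. P x" by blast
lemma restr2: "\<forall>x\<in>A. \<forall>y\<in>A. P x y \<Longrightarrow> B \<subseteq> A \<Longrightarrow> \<forall>x\<in>B. \<forall>y\<in>B. P x y" by blast
lemma restr3: "\<forall>x\<in>A. \<forall>y\<in>A. \<forall>z\<in>A. P x y z \<Longrightarrow> B \<subseteq> A \<Longrightarrow> \<forall>x\<in>B. \<forall>y\<in>B. \<forall>z\<in>B. P x y z" by blast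

lemma ex_max_rel:
  assumes "finite A" "A \<noteq> {}"
    and "\<forall>x\<in>A. \<forall>y\<in>A. le x y \<or> le y x"
    and "\<forall>x\<in>A. \<forall>y\<in>A. \<forall>z\<in>A. le x y \<longrightarrow> le y z \<longrightarrow> le x z"
    and "\<forall>x\<in>A. le x x"
  shows "\<exists>m\<in>A. \<forall>x\<in>A. le x m"
  using assms
proof (induction A rule: finite_ne_induct)
  case (singleton x) then show ?case by blast
next
  case (insert x F)
  have p3: "\<forall>x\<in>F. \<forall>y\<in>F. le x y \<or> le y x" using restr2[OF insert.prems(1)] by blast
  have p4: "\<forall>x\<in>F. \<forall>y\<in>F. \<forall>z\<in>F. le x y \<longrightarrow> le y z \<longrightarrow> le x z" using restr3[OF insert.prems(2)] by blast
  have p5: "\<forall>x\<in>F. le x x" using restr1[OF insert.prems(3)] by blast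
  obtain m where m: "m\<in>F" "\<forall>y\<in>F. le y m" using insert.IH[OF p3 p4 p5] by blast
  show ?case
  proof (cases "le m x")
    case True
    have "\<forall>y\<in>insert x F. le y x"
    proof
      fix y assume y: "y \<in> insert x F"
      show "le y x"
      proof (cases "y = x")
        case True then show ?thesis using insert.prems(3) by simp
      next
        case False
        then have "y \<in> F" using y by simp
        then have "le y m" using m by simp
        have "y \<in> insert x F" "m \<in> insert x F" "x \<in> insert x F" using \<open>y \<in> F\<close> m(1) by simp_all
        then show ?thesis using insert.prems(2)[rule_format, of y m x] \<open>le y m\<close> True by simp
      qed
    qed
    then show ?thesis by blast
  next
    case False
    have "m \<in> insert x F" "x \<in> insert x F" using m(1) by simp_all
    then have "le x m" using insert.prems(1)[rule_format, of x m] False by simp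
    then have "\<forall>y\<in>insert x F. le y m" using m by simp
    then show ?thesis using m(1) by blast
  qed
qed

lemma greedy:
  fixes A :: "'a set" and good :: "'a \<Rightarrow> 'b set"
  assumes "finite A"
    and "\<forall>x\<in>A. \<forall>y\<in>A. le x y \<or> le y x"
    and "\<forall>x\<in>A. \<forall>y\<in>A. \<forall>z\<in>A. le x y \<longrightarrow> le y z \<longrightarrow> le x z"
    and "\<forall>x\<in>A. le x x"
    and "\<forall>a\<in>A. card {a'\<in>A. le a' a} \<le> card (good a)"
  shows "\<exists>f. inj_on f A \<and> (\<forall>a\<in>A. f a \<in> good a)"
  using assms
proof (induction "card A" arbitrary: A)
  case 0
  from "0.hyps" "0.prems"(1) have "A = {}" by simp
  then show ?case by simp
next
  case (Suc k)
  from Suc.hyps(2) have ne: "A \<noteq> {}" by auto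
  obtain a0 where a0: "a0 \<in> A" "\<forall>x\<in>A. le x a0"
    using ex_max_rel[OF Suc.prems(1) ne Suc.prems(2) Suc.prems(3) Suc.prems(4)] by blast
  define A0 where "A0 = A - {a0}"
  have sub: "A0 \<subseteq> A" unfolding A0_def by blast
  have finA0: "finite A0" using Suc.prems(1) sub finite_subset by blast
  have cA0: "k = card A0" using Suc.hyps(2) a0(1) Suc.prems(1) unfolding A0_def by simp
  have "\<forall>a\<in>A0. card {a'\<in>A0. le a' a} \<le> card (good a)"
  proof
    fix a assume aA0: "a \<in> A0"
    have "{a'\<in>A0. le a' a} \<subseteq> {a'\<in>A. le a' a}" using sub by blast
    then have "card {a'\<in>A0. le a' a} \<le> card {a'\<in>A. le a' a}"
      using Suc.prems(1) by (intro card_mono) simp_all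
    moreover have "card {a'\<in>A. le a' a} \<le> card (good a)"
      using Suc.prems(5) aA0 sub by blast
    ultimately show "card {a'\<in>A0. le a' a} \<le> card (good a)" by linarith
  qed
  then obtain f where f: "inj_on f A0" "\<forall>a\<in>A0. f a \<in> good a"
    using Suc.hyps(1)[OF cA0 finA0 restr2[OF Suc.prems(2) sub] restr3[OF Suc.prems(3) sub]
       restr1[OF Suc.prems(4) sub]] by blast
  have "{a'\<in>A. le a' a0} = A" using a0 by blast
  then have cg: "Suc k \<le> card (good a0)" using Suc.prems(5) a0(1) Suc.hyps(2) by metis
  then have fg: "finite (good a0)" using card.infinite by fastforce
  have cf: "card (f ` A0) \<le> k" using cA0 card_image_le[OF finA0] by simp
  have "\<not> good a0 \<subseteq> f ` A0"
  proof
    assume "good a0 \<subseteq> f ` A0"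
    then have "card (good a0) \<le> card (f ` A0)" using finA0 by (intro card_mono) simp_all
    then show False using cg cf by linarith
  qed
  then obtain c where c: "c \<in> good a0" "c \<notin> f ` A0" by blast
  have AA: "A = insert a0 A0" using a0(1) unfolding A0_def by blast
  have a0n: "a0 \<notin> A0" unfolding A0_def by blast
  have "inj_on (f(a0 := c)) A0" using f(1) a0n by (simp add: inj_on_def)
  moreover have "(f(a0 := c)) ` A0 = f ` A0" using a0n by (auto simp: image_def)
  then have "c \<notin> (f(a0 := c)) ` A0" using c(2) by simp
  moreover have A0eq: "A0 - {a0} = A0" using a0n by blast
  ultimately have "inj_on (f(a0 := c)) A" unfolding AA inj_on_insert by (metis fun_upd_same)
  moreover have "\<forall>a\<in>A. (f(a0 := c)) a \<in> good a"
    using f(2) c(1) a0n unfolding AA by simp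
  ultimately show ?case by blast
qed

lemma mrank_ge:
  assumes "matroid E I" "I A" "A \<subseteq> E"
  shows "card A \<le> mrank E I"
proof -
  have "finite E" using assms(1) unfolding matroid_def by auto
  then have "finite (card ` {A. A \<subseteq> E \<and> I A})" by auto
  then show ?thesis unfolding mrank_def using assms by (intro Max_ge) auto
qed

lemma mrank_attained:
  assumes "matroid E I"
  shows "\<exists>A. A \<subseteq> E \<and> I A \<and> card A = mrank E I"
proof -
  have "finite E" using assms(1) unfolding matroid_def by auto
  then have "finite (card ` {A. A \<subseteq> E \<and> I A})" by auto
  moreover have "{A. A \<subseteq> E \<and> I A} \<noteq> {}" using assms unfolding matroid_def by auto
  ultimately have "mrank E I \<in> card ` {A. A \<subseteq> E \<and> I A}"
    unfolding mrank_def by (intro Max_in) auto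
  then show ?thesis by auto
qed

lemma basis_card:
  assumes "matroid E I" "is_basis E I B"
  shows "card B = mrank E I"
proof (rule ccontr)
  assume ne: "card B \<noteq> mrank E I"
  have "card B \<le> mrank E I" using mrank_ge assms unfolding is_basis_def by auto
  with ne have lt: "card B < mrank E I" by auto
  obtain A where A: "A \<subseteq> E" "I A" "card A = mrank E I" using mrank_attained assms(1) by blast
  then obtain x where x: "x \<in> A - B" "I (insert x B)"
    using assms lt unfolding matroid_def is_basis_def by (metis (no_types, lifting))
  have "insert x B \<subseteq> E" using x A assms(2) unfolding is_basis_def by auto
  then have "insert x B = B" using assms(2) x unfolding is_basis_def by blast
  then show False using x by auto
qed

theorem theorem2p10:
  fixes EM EN :: "'a::ab_group_add set"
    and IM IN :: "'a set \<Rightarrow> bool"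
    and le :: "'a \<Rightarrow> 'a \<Rightarrow> bool"
    and n :: nat
  assumes "matroid EM IM" and "loopless EM IM"
    and "matroid EN IN" and "loopless EN IN"
    and "paving EN IN"
    and "mrank EM IM = n" and "mrank EN IN = n"
    and "card EM = n + 1" and "card EN = n + 1"
    and "enat (n + 1) < pG TYPE('a)"
    and "total_order_on (EM \<union> EN \<union> sumset EM EN \<union> {0}) le"
    and "compatible_order (EM \<union> EN \<union> sumset EM EN \<union> {0}) le"
    and "positive_set le EM" and "positive_set le EN"
    and "\<forall>m\<in>EM. (\<forall>x\<in>EM. le x m) \<longrightarrow> m \<notin> sumset EM EN"
  shows "matroid_matched EM IM EN IN"
proof -
  define S where "S = EM \<union> EN \<union> sumset EM EN \<union> {0}"
  have finM: "finite EM" using assms(1) unfolding matroid_def by auto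
  have finN: "finite EN" using assms(3) unfolding matroid_def by auto
  have TO: "total_order_on S le" using assms(11) unfolding S_def .
  note TO' = TO[unfolded total_order_on_def]
  have refl: "\<forall>x\<in>S. le x x" using conjunct1[OF TO'] .
  have antis: "\<forall>x\<in>S. \<forall>y\<in>S. le x y \<and> le y x \<longrightarrow> x = y" using conjunct1[OF conjunct2[OF TO']] .
  have trans: "\<forall>x\<in>S. \<forall>y\<in>S. \<forall>z\<in>S. le x y \<and> le y z \<longrightarrow> le x z"
    using conjunct1[OF conjunct2[OF conjunct2[OF TO']]] .
  have tot: "\<forall>x\<in>S. \<forall>y\<in>S. le x y \<or> le y x" using conjunct2[OF conjunct2[OF conjunct2[OF TO']]] .
  have sumI: "a + b \<in> sumset EM EN" if "a \<in> EM" "b \<in> EN" for a b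
    using that unfolding sumset_def by auto
  have pos: "le a (a + b) \<and> a + b \<noteq> a" if "a \<in> EM" "b \<in> EN" for a b
  proof -
    have "le 0 b" "b \<noteq> 0" using assms(14) that unfolding positive_set_def by auto
    have "0 \<in> S" "b \<in> S" "a \<in> S" using that unfolding S_def by auto
    then have "le (0 + a) (b + a)"
      using assms(12) \<open>le 0 b\<close> unfolding compatible_order_def S_def[symmetric] by blast
    then show ?thesis using \<open>b \<noteq> 0\<close> by (simp add: add.commute)
  qed
  have n1: "n \<ge> 1"
  proof -
    have "EM \<noteq> {}"
    proof
      assume "EM = {}"
      then show False using assms(8) by simp
    qed
    then obtain e where "e \<in> EM" by blast
    then have "IM {e}" "{e} \<subseteq> EM" using assms(2) unfolding loopless_def by auto
    then have "card {e} \<le> n" using mrank_ge[OF assms(1)] assms(6) by metis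
    then show ?thesis by simp
  qed
  show ?thesis unfolding matroid_matched_def
  proof (intro allI impI)
    fix BM assume BM: "is_basis EM IM BM"
    have cBM: "card BM = n" using basis_card[OF assms(1) BM] assms(6) by auto
    have BMsub: "BM \<subseteq> EM" using BM unfolding is_basis_def by auto
    have finBM: "finite BM" using BMsub finM finite_subset by auto
    have "BM \<noteq> {}" using cBM n1 by auto
    have BMS: "BM \<subseteq> S" using BMsub unfolding S_def by auto
    have EMS: "EM \<subseteq> S" unfolding S_def by auto
    have totB: "\<forall>x\<in>BM. \<forall>y\<in>BM. le x y \<or> le y x" using restr2[OF tot BMS] .
    have transB: "\<forall>x\<in>BM. \<forall>y\<in>BM. \<forall>z\<in>BM. le x y \<longrightarrow> le y z \<longrightarrow> le x z"
      using restr3[OF trans BMS] by blast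
    have reflB: "\<forall>x\<in>BM. le x x" using restr1[OF refl BMS] .
    obtain t where t: "t \<in> BM" "\<forall>x\<in>BM. le x t"
      using ex_max_rel[OF finBM \<open>BM \<noteq> {}\<close> totB transB reflB] by blast
    define A' where "A' = BM - {t}"
    define good where "good a = {b\<in>EN. a + b \<notin> EM}" for a
    have cEMBM: "card (EM - BM) = 1" using cBM assms(8) BMsub finBM
      by (simp add: card_Diff_subset)
    have claim2: "t + b \<notin> EM" if "b \<in> EN" for b
    proof
      assume x: "t + b \<in> EM"
      have tx: "le t (t + b)" "t + b \<noteq> t" using pos t BMsub that by auto
      have "t + b \<notin> BM"
      proof
        assume "t + b \<in> BM"
        then have "le (t+b) t" using t by auto
        then show False using tx antis[rule_format, of "t+b" t] x t EMS BMS by blast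
      qed
      then have xD: "t + b \<in> EM - BM" using x by auto
      have "\<forall>e\<in>EM. le e (t + b)"
      proof
        fix e assume e: "e \<in> EM"
        show "le e (t + b)"
        proof (cases "e \<in> BM")
          case True
          then have "le e t" using t by auto
          then show ?thesis using trans[rule_format, of e t "t+b"] tx e x t EMS BMS by blast
        next
          case False
          then have "e \<in> EM - BM" using e by blast
          then have "e = t + b" using xD cEMBM by (metis card_1_singletonE singletonD)
          then show ?thesis using refl[rule_format, of "t+b"] x EMS by blast
        qed
      qed
      then show False using assms(15) x sumI[OF _ that] t BMsub by blast
    qed
    have claim1: "\<forall>a\<in>A'. card {a'\<in>A'. le a' a} \<le> card (good a)"
    proof
      fix a assume aA: "a \<in> A'"
      then have aM: "a \<in> EM" using BMsub unfolding A'_def by auto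
      define G where "G = {e\<in>EM. le a e \<and> e \<noteq> a}"
      define R where "R = {a'\<in>A'. le a' a}"
      have "(\<lambda>b. a + b) ` (EN - good a) \<subseteq> G"
        unfolding G_def good_def using pos aM by auto
      moreover have "inj_on (\<lambda>b. a + b) (EN - good a)" by (auto simp: inj_on_def)
      ultimately have c1: "card (EN - good a) \<le> card G"
        using card_inj_on_le[of "\<lambda>b. a + b" "EN - good a" G] finM unfolding G_def by auto
      have c2: "card (good a) = n + 1 - card (EN - good a)"
        using assms(9) finN by (metis Diff_Diff_Int card_Diff_subset_Int finite_Diff
             good_def inf.absorb2 mem_Collect_eq subsetI)
      have "G \<inter> R = {}"
      proof (rule ccontr)
        assume "G \<inter> R \<noteq> {}"
        then obtain e where "e \<in> G" "e \<in> R" by auto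
        then have "le a e" "le e a" "e \<noteq> a" "e \<in> EM" unfolding G_def R_def by auto
        then show False using antis[rule_format, of a e] aM EMS by blast
      qed
      moreover have "G \<union> R \<subseteq> EM" unfolding G_def R_def A'_def using BMsub by auto
      ultimately have "card G + card R \<le> n + 1"
        using assms(8) finM
        by (metis card_Un_disjoint card_mono finite_Un finite_subset)
      then show "card {a'\<in>A'. le a' a} \<le> card (good a)"
        using c1 c2 unfolding R_def by linarith
    qed
    obtain f where f: "inj_on f A'" "\<forall>a\<in>A'. f a \<in> good a"
    proof -
      have AB: "A' \<subseteq> BM" unfolding A'_def by blast
      have "finite A'" using finBM AB finite_subset by blast
      then show ?thesis using greedy[OF _ restr2[OF totB AB] restr3[OF transB AB] restr1[OF reflB AB] claim1]
        that by blast
    qed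
    define F where "F = f ` A'"
    have cA': "card A' = n - 1" using cBM t finBM unfolding A'_def by auto
    have cF: "card F = n - 1" using card_image[OF f(1)] cA' unfolding F_def by auto
    have FN: "F \<subseteq> EN" using f(2) unfolding F_def good_def by auto
    have IF: "IN F" using assms(5,7) cF FN unfolding paving_def by auto
    obtain A where A: "A \<subseteq> EN" "IN A" "card A = n" using mrank_attained[OF assms(3)] assms(7) by auto
    have "card F < card A" using cF A n1 by auto
    then obtain c where c: "c \<in> A - F" "IN (insert c F)"
      using assms(3) IF A unfolding matroid_def by (metis (no_types, lifting))
    define BN where "BN = insert c F"
    have cN: "c \<in> EN" using c A by auto
    have finF: "finite F" using FN finN finite_subset by auto
    have cBN: "card BN = n" unfolding BN_def using c cF finF n1 by auto
    have BNsub: "BN \<subseteq> EN" unfolding BN_def using cN FN by auto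
    have basN: "is_basis EN IN BN"
      unfolding is_basis_def
    proof (intro conjI allI impI)
      show "BN \<subseteq> EN" by fact
      show "IN BN" using c unfolding BN_def by auto
      fix C assume C: "C \<subseteq> EN \<and> IN C \<and> BN \<subseteq> C"
      then have "card C \<le> n" using mrank_ge[OF assms(3)] assms(7) by auto
      moreover have "finite C" using C finN finite_subset by auto
      ultimately show "C = BN" using C cBN by (metis card_seteq)
    qed
    have BMeq: "BM = insert t A'" using t unfolding A'_def by auto
    have tA: "t \<notin> A'" unfolding A'_def by auto
    have "bij_betw (f(t := c)) BM BN"
    proof -
      have "inj_on (f(t := c)) BM"
        unfolding BMeq using f(1) c tA unfolding F_def by (auto simp: inj_on_def)
      moreover have "(f(t := c)) ` BM = BN"
        unfolding BMeq BN_def F_def using tA by auto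
      ultimately show ?thesis unfolding bij_betw_def by auto
    qed
    moreover have "\<forall>a\<in>BM. a + (f(t := c)) a \<notin> EM"
      using claim2 cN f(2) tA unfolding BMeq good_def by auto
    ultimately have "basis_matched EM BM BN" unfolding basis_matched_def by blast
    then show "\<exists>BN. is_basis EN IN BN \<and> basis_matched EM BM BN" using basN by blast
  qed
qed

end
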